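(* Let $n\ge 2$ and $m\in\mathbb{N}$. The sequence \[ \big(t_2^m-t_1^m,\ t_3^m-t_2^m,\ \dots,\ t_{n-1}^m-t_{n-2}^m,\ -t_1^m\cdots t_{n-2}^m\,t_{n-1}^{2m}\big) \] is a regular sequence in $\mathbb{Q}[t_1,\dots,t_{n-1}]$. *)

theory Defs
  imports Complex_Main "HOL-Library.Poly_Mapping"
begin

text \<open>Multivariate polynomials over a ring: finitely supported maps from monomials
  (finitely supported exponent vectors \<open>nat \<Rightarrow>\<^sub>0 nat\<close>, variable \<open>i\<close> is \<open>t_i\<close>)
  to coefficients.\<close>
type_synonym 'a mpoly = "(nat \<Rightarrow>\<^sub>0 nat) \<Rightarrow>\<^sub>0 'a"

definition var :: "nat \<Rightarrow> 'a::comm_ring_1 mpoly" where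
  "var i = Poly_Mapping.single (Poly_Mapping.single i 1) 1"

definition poly_ring :: "nat set \<Rightarrow> 'a::comm_ring_1 mpoly set" where
  "poly_ring V = {p :: 'a mpoly. \<forall>mon \<in> Poly_Mapping.keys p. Poly_Mapping.keys mon \<subseteq> V}"

definition ideal_gen :: "'a::comm_ring_1 set \<Rightarrow> 'a list \<Rightarrow> 'a set" where
  "ideal_gen R fs = {(\<Sum>i<length fs. c i * fs ! i) | c. \<forall>i. c i \<in> R}"

definition regular_sequence :: "'a::comm_ring_1 set \<Rightarrow> 'a list \<Rightarrow> bool" where
  "regular_sequence R fs \<longleftrightarrow>
     set fs \<subseteq> R \<and>
     (\<forall>i < length fs. \<forall>g \<in> R.
        fs ! i * g \<in> ideal_gen R (take i fs) \<longrightarrow> g \<in> ideal_gen R (take i fs)) \<and>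
     1 \<notin> ideal_gen R fs"

end

theory Submission
  imports Defs
begin

abbreviation lk where "lk \<equiv> Poly_Mapping.lookup"
abbreviation sg where "sg \<equiv> Poly_Mapping.single"
abbreviation ks where "ks \<equiv> Poly_Mapping.keys"

lemma var_power: "(var i :: 'a::comm_ring_1 mpoly) ^ k = sg (sg i k) 1"
  by (induction k) (simp_all add: var_def mult_single single_add[symmetric] add.commute)

lemma poly_expand: "(p :: 'a::comm_ring_1 mpoly) = (\<Sum>e\<in>ks p. sg e (lk p e))"
  by (rule poly_mapping_eqI) (auto simp: lookup_sum lookup_single when_def in_keys_iff)

definition Nf :: "((nat \<Rightarrow>\<^sub>0 nat) \<Rightarrow> (nat \<Rightarrow>\<^sub>0 nat)) \<Rightarrow> rat mpoly \<Rightarrow> rat mpoly" where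
  "Nf \<nu> p = (\<Sum>e\<in>ks p. sg (\<nu> e) (lk p e))"

lemma Nf_superset: assumes "finite A" "ks p \<subseteq> A"
  shows "Nf \<nu> p = (\<Sum>e\<in>A. sg (\<nu> e) (lk p e))"
  unfolding Nf_def
  by (rule sum.mono_neutral_left) (use assms in \<open>auto simp: not_in_keys_iff_lookup_eq_zero\<close>)

lemma Nf_add: "Nf \<nu> (p + q) = Nf \<nu> p + Nf \<nu> q"
proof -
  let ?A = "ks p \<union> ks q"
  have "ks (p+q) \<subseteq> ?A" by (rule keys_add)
  then have "Nf \<nu> (p+q) = (\<Sum>e\<in>?A. sg (\<nu> e) (lk (p+q) e))" by (intro Nf_superset) auto
  also have "\<dots> = (\<Sum>e\<in>?A. sg (\<nu> e) (lk p e)) + (\<Sum>e\<in>?A. sg (\<nu> e) (lk q e))"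
    by (simp add: lookup_add single_add sum.distrib)
  also have "\<dots> = Nf \<nu> p + Nf \<nu> q" by (subst (1 2) Nf_superset[of ?A]) auto
  finally show ?thesis .
qed

lemma Nf_zero[simp]: "Nf \<nu> 0 = 0" by (simp add: Nf_def)

lemma Nf_uminus: "Nf \<nu> (- p) = - Nf \<nu> p"
  using Nf_add[of \<nu> p "-p"] by (simp add: eq_neg_iff_add_eq_0 add.commute)

lemma Nf_diff: "Nf \<nu> (p - q) = Nf \<nu> p - Nf \<nu> q"
  using Nf_add[of \<nu> p "-q"] Nf_uminus[of \<nu> q] by simp

lemma Nf_sum: "Nf \<nu> (\<Sum>i\<in>A. h i) = (\<Sum>i\<in>A. Nf \<nu> (h i))"
  by (induction A rule: infinite_finite_induct) (auto simp: Nf_add)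

lemma Nf_single: "Nf \<nu> (sg e c) = sg (\<nu> e) c"
  by (subst Nf_superset[of "{e}"]) (auto simp: lookup_single)

lemma Nf_shift: assumes "\<And>e. \<nu> (e + a) = \<nu> e + b"
  shows "Nf \<nu> (sg a c * p) = sg b c * Nf \<nu> p"
proof -
  have "sg a c * p = (\<Sum>e\<in>ks p. sg (a + e) (c * lk p e))"
    by (subst poly_expand[of p]) (simp add: sum_distrib_left mult_single)
  then have "Nf \<nu> (sg a c * p) = (\<Sum>e\<in>ks p. sg (\<nu> e + b) (c * lk p e))"
    by (simp add: Nf_sum Nf_single assms add.commute)
  also have "\<dots> = sg b c * Nf \<nu> p"
    by (simp add: Nf_def sum_distrib_left mult_single add.commute)
  finally show ?thesis .
qed

definition exc :: "nat \<Rightarrow> nat \<Rightarrow> (nat \<Rightarrow>\<^sub>0 nat) \<Rightarrow> nat" where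
  "exc m J e = (\<Sum>l=2..J. lk e l div m)"

definition nuf :: "nat \<Rightarrow> nat \<Rightarrow> (nat \<Rightarrow>\<^sub>0 nat) \<Rightarrow> nat \<Rightarrow> nat" where
  "nuf m J e i = (if 2 \<le> i \<and> i \<le> J then lk e i mod m else if i = 1 then lk e 1 + m * exc m J e else lk e i)"

definition nu :: "nat \<Rightarrow> nat \<Rightarrow> (nat \<Rightarrow>\<^sub>0 nat) \<Rightarrow> (nat \<Rightarrow>\<^sub>0 nat)" where
  "nu m J e = Abs_poly_mapping (nuf m J e)"

lemma lookup_nu: "lk (nu m J e) = nuf m J e"
proof -
  have "{i. nuf m J e i \<noteq> 0} \<subseteq> insert 1 {i. lk e i \<noteq> 0}"
    by (auto simp: nuf_def split: if_splits)
  then have "finite {i. nuf m J e i \<noteq> 0}" by (rule finite_subset) simp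
  then show ?thesis unfolding nu_def by simp
qed

lemma exc_shift_low: assumes "2 \<le> i" "i \<le> J" "m > 0"
  shows "exc m J (e + sg i m) = exc m J e + 1"
proof -
  have "exc m J (e + sg i m) = (\<Sum>l=2..J. lk e l div m + (if l = i then 1 else 0))"
    unfolding exc_def by (intro sum.cong) (auto simp: lookup_add lookup_single assms)
  also have "\<dots> = exc m J e + 1" using assms by (simp add: sum.distrib exc_def)
  finally show ?thesis .
qed

lemma exc_shift_high: assumes "\<not> (2 \<le> i \<and> i \<le> J)"
  shows "exc m J (e + sg i a) = exc m J e"
  unfolding exc_def using assms by (intro sum.cong) (auto simp: lookup_add lookup_single)

lemma nu_shift_low: assumes "1 \<le> i" "i \<le> J" "m > 0"
  shows "nu m J (e + sg i m) = nu m J e + sg 1 m"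
proof (cases "i = 1")
  case True
  then show ?thesis
    by (intro poly_mapping_eqI) (auto simp: lookup_nu lookup_add nuf_def lookup_single exc_shift_high)
next
  case False
  then have "2 \<le> i" using assms by simp
  then show ?thesis using assms
    by (intro poly_mapping_eqI) (auto simp: lookup_nu lookup_add nuf_def lookup_single exc_shift_low when_def)
qed

lemma nu_shift_high: assumes "\<not> (2 \<le> i \<and> i \<le> J)"
  shows "nu m J (e + sg i a) = nu m J e + sg i a"
  using assms
  by (intro poly_mapping_eqI) (auto simp: lookup_nu lookup_add nuf_def lookup_single exc_shift_high)

lemma nu_exc0: assumes "exc m J e = 0" "m > 0" shows "nu m J e = e"
proof (rule poly_mapping_eqI)
  fix i
  have "\<forall>l\<in>{2..J}. lk e l div m = 0" using assms(1) unfolding exc_def by simp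
  then show "lk (nu m J e) i = lk e i"
    using assms by (auto simp: lookup_nu nuf_def div_eq_0_iff)
qed

abbreviation NN where "NN m J \<equiv> Nf (nu m J)"

lemma NN_var_low: assumes "1 \<le> i" "i \<le> J" "m > 0"
  shows "NN m J (var i ^ m * g) = var 1 ^ m * NN m J g"
  unfolding var_power by (rule Nf_shift) (rule nu_shift_low[OF assms])

lemma NN_var_high: assumes "\<not> (2 \<le> i \<and> i \<le> J)"
  shows "NN m J (var i ^ k * g) = var i ^ k * NN m J g"
  unfolding var_power by (rule Nf_shift) (simp add: nu_shift_high assms)

lemma keys_uminus': "ks (- p) = ks p"
  by (rule keys_minus)

lemma pr_add: "p \<in> poly_ring V \<Longrightarrow> q \<in> poly_ring V \<Longrightarrow> p + q \<in> poly_ring V"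
  unfolding poly_ring_def using keys_add[of p q] by auto

lemma pr_uminus: "p \<in> poly_ring V \<Longrightarrow> - p \<in> poly_ring V"
  unfolding poly_ring_def by (simp add: keys_uminus')

lemma pr_diff: "p \<in> poly_ring V \<Longrightarrow> q \<in> poly_ring V \<Longrightarrow> p - q \<in> poly_ring V"
  using pr_add[of p V "-q"] pr_uminus[of q V] by simp

lemma pr_mult: assumes "p \<in> poly_ring V" "q \<in> poly_ring V" shows "p * q \<in> poly_ring V"
  unfolding poly_ring_def
proof (intro CollectI ballI)
  fix mon assume "mon \<in> ks (p * q)"
  then obtain a b where "mon = a + b" "a \<in> ks p" "b \<in> ks q" using keys_mult by blast
  moreover have "ks a \<subseteq> V" "ks b \<subseteq> V" using assms \<open>a \<in> ks p\<close> \<open>b \<in> ks q\<close> unfolding poly_ring_def by auto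
  ultimately show "ks mon \<subseteq> V" using keys_add[of a b] by auto
qed

lemma pr_single: "ks e \<subseteq> V \<Longrightarrow> sg e c \<in> poly_ring V"
  unfolding poly_ring_def by (auto simp: keys_single split: if_splits)

lemma pr_zero: "0 \<in> poly_ring V" unfolding poly_ring_def by simp
lemma pr_one: "1 \<in> poly_ring V" unfolding poly_ring_def by simp

lemma pr_var_power: "i \<in> V \<Longrightarrow> (var i :: 'a::comm_ring_1 mpoly) ^ k \<in> poly_ring V"
  unfolding var_power by (rule pr_single) auto

lemma pr_prod: "(\<And>i. i \<in> A \<Longrightarrow> f i \<in> poly_ring V) \<Longrightarrow> prod f A \<in> poly_ring V"
  by (induction A rule: infinite_finite_induct) (auto simp: pr_one pr_mult)

lemma ig_intro: "\<forall>i. c i \<in> R \<Longrightarrow> (\<Sum>i<length fs. c i * fs ! i) \<in> ideal_gen R fs"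
  unfolding ideal_gen_def by blast

lemma ig_zero: "0 \<in> ideal_gen (poly_ring V) fs"
  using ig_intro[of "\<lambda>_. 0" "poly_ring V" fs] by (simp add: pr_zero)

lemma ig_add: assumes "a \<in> ideal_gen (poly_ring V) fs" "b \<in> ideal_gen (poly_ring V) fs"
  shows "a + b \<in> ideal_gen (poly_ring V) fs"
proof -
  obtain c where c: "a = (\<Sum>i<length fs. c i * fs ! i)" "\<forall>i. c i \<in> poly_ring V"
    using assms(1) unfolding ideal_gen_def by blast
  obtain d where d: "b = (\<Sum>i<length fs. d i * fs ! i)" "\<forall>i. d i \<in> poly_ring V"
    using assms(2) unfolding ideal_gen_def by blast
  have "a + b = (\<Sum>i<length fs. (c i + d i) * fs ! i)"
    by (simp add: c d sum.distrib distrib_right)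
  moreover have "\<forall>i. c i + d i \<in> poly_ring V" using c d pr_add by blast
  ultimately show ?thesis using ig_intro[of "\<lambda>i. c i + d i" "poly_ring V" fs] by simp
qed

lemma ig_mult: assumes "r \<in> poly_ring V" "a \<in> ideal_gen (poly_ring V) fs"
  shows "r * a \<in> ideal_gen (poly_ring V) fs"
proof -
  obtain c where c: "a = (\<Sum>i<length fs. c i * fs ! i)" "\<forall>i. c i \<in> poly_ring V"
    using assms(2) unfolding ideal_gen_def by blast
  have "r * a = (\<Sum>i<length fs. (r * c i) * fs ! i)"
    by (simp add: c sum_distrib_left mult.assoc)
  moreover have "\<forall>i. r * c i \<in> poly_ring V" using c assms(1) pr_mult by blast
  ultimately show ?thesis using ig_intro[of "\<lambda>i. r * c i" "poly_ring V" fs] by simp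
qed

lemma ig_uminus: assumes "a \<in> ideal_gen (poly_ring V) fs" shows "- a \<in> ideal_gen (poly_ring V) fs"
proof -
  have "(-1) * a \<in> ideal_gen (poly_ring V) fs" by (rule ig_mult[OF pr_uminus[OF pr_one] assms])
  then show ?thesis by simp
qed

lemma ig_diff: "a \<in> ideal_gen (poly_ring V) fs \<Longrightarrow> b \<in> ideal_gen (poly_ring V) fs \<Longrightarrow> a - b \<in> ideal_gen (poly_ring V) fs"
  using ig_add[of a V fs "-b"] ig_uminus[of b V fs] by simp

lemma ig_sum: "(\<And>i. i \<in> A \<Longrightarrow> h i \<in> ideal_gen (poly_ring V) fs) \<Longrightarrow> (\<Sum>i\<in>A. h i) \<in> ideal_gen (poly_ring V) fs"
  by (induction A rule: infinite_finite_induct) (auto simp: ig_zero ig_add)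

lemma ig_nth: assumes "k < length fs" shows "fs ! k \<in> ideal_gen (poly_ring V) fs"
proof -
  have "(\<Sum>i<length fs. (if i = k then 1 else 0) * fs ! i) = (\<Sum>i<length fs. if i = k then fs ! i else 0)"
    by (rule sum.cong) auto
  also have "\<dots> = fs ! k" using assms by simp
  finally have e: "(\<Sum>i<length fs. (if i = k then 1 else 0) * fs ! i) = fs ! k" .
  have "\<forall>i. (if i = k then 1 else 0) \<in> poly_ring V" using pr_zero pr_one by auto
  from ig_intro[OF this, of fs] show ?thesis unfolding e .
qed

definition L :: "nat \<Rightarrow> nat \<Rightarrow> rat mpoly list" where
  "L m j = map (\<lambda>i. var (i+1) ^ m - var i ^ m) [1..<j+1]"

lemma L_len[simp]: "length (L m j) = j" by (simp add: L_def)

lemma L_nth: "i < j \<Longrightarrow> L m j ! i = var (i+2) ^ m - var (i+1) ^ m"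
  unfolding L_def by (simp del: upt_Suc add: nth_map nth_upt add.commute)

lemma NN_ideal: assumes "m > 0" "p \<in> ideal_gen R (L m j)" shows "NN m (j+1) p = 0"
proof -
  obtain c where c: "p = (\<Sum>i<j. c i * L m j ! i)"
    using assms(2) unfolding ideal_gen_def by auto
  have "NN m (j+1) (c i * L m j ! i) = 0" if "i < j" for i
  proof -
    have "c i * L m j ! i = var (i+2) ^ m * c i - var (i+1) ^ m * c i"
      using that by (simp add: L_nth algebra_simps)
    then show ?thesis using that assms(1) by (simp add: Nf_diff NN_var_low)
  qed
  then show ?thesis unfolding c Nf_sum by simp
qed

lemma telescope: assumes "d \<le> j"
  shows "var (d+1) ^ m - var 1 ^ m \<in> ideal_gen (poly_ring V) (L m j)"
  using assms
proof (induction d)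
  case 0
  then show ?case by (simp add: ig_zero)
next
  case (Suc d)
  have "var (Suc d + 1) ^ m - var 1 ^ m = L m j ! d + (var (d+1) ^ m - var 1 ^ m)"
    using Suc.prems by (simp add: L_nth)
  moreover have Ld: "L m j ! d \<in> ideal_gen (poly_ring V) (L m j)"
    using Suc.prems by (intro ig_nth) simp
  moreover have "L m j ! d + (var (d+1) ^ m - var 1 ^ m) \<in> ideal_gen (poly_ring V) (L m j)"
    using Suc by (intro ig_add[OF Ld]) auto
  ultimately show ?case by metis
qed

lemma mono_diff: assumes "m > 0" "1 \<in> V" "ks e \<subseteq> V"
  shows "sg e 1 - sg (nu m (j+1) e) 1 \<in> ideal_gen (poly_ring V) (L m j)"
proof -
  have "\<And>e. k = exc m (j+1) e \<Longrightarrow> ks e \<subseteq> V \<Longrightarrow> sg e 1 - sg (nu m (j+1) e) 1 \<in> ideal_gen (poly_ring V) (L m j)" for k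
  proof (induction k rule: less_induct)
    case (less k e)
    show ?case
    proof (cases "exc m (j+1) e = 0")
      case True
      then show ?thesis using assms(1) by (simp add: nu_exc0 ig_zero)
    next
      case False
      have "\<not> (\<forall>l\<in>{2..j+1}. lk e l div m = 0)"
      proof
        assume "\<forall>l\<in>{2..j+1}. lk e l div m = 0"
        then have "exc m (j+1) e = 0" unfolding exc_def by simp
        with False show False by simp
      qed
      then obtain i where i: "2 \<le> i" "i \<le> j+1" "lk e i div m \<noteq> 0"
        by auto
      then have ge: "lk e i \<ge> m" by (simp add: div_eq_0_iff)
      define e' where "e' = Poly_Mapping.update i (lk e i - m) e"
      have e_eq: "e = e' + sg i m"
        by (rule poly_mapping_eqI) (use ge in \<open>auto simp: e'_def lookup_add lookup_update lookup_single when_def\<close>)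
      have ke': "ks e' \<subseteq> V"
      proof
        fix x assume "x \<in> ks e'"
        then have "lk e' x \<noteq> 0" by (meson in_keys_iff)
        then have "lk e x \<noteq> 0" using ge assms(1)
          by (auto simp: e'_def lookup_update split: if_splits)
        then have "x \<in> ks e" by (meson in_keys_iff)
        then show "x \<in> V" using less.prems(2) by auto
      qed
      define e'' where "e'' = e' + sg 1 m"
      have ke'': "ks e'' \<subseteq> V" using ke' assms(2) keys_add[of e' "sg 1 m"] unfolding e''_def by (auto split: if_splits)
      have exc1: "exc m (j+1) e = exc m (j+1) e' + 1"
        using i assms(1) by (simp add: e_eq exc_shift_low)
      have exc2: "exc m (j+1) e'' = exc m (j+1) e'"
        unfolding e''_def by (rule exc_shift_high) simp
      have nu_eq: "nu m (j+1) e'' = nu m (j+1) e"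
        unfolding e''_def using i assms(1)
        by (simp add: e_eq nu_shift_low nu_shift_high)
      have IH: "sg e'' 1 - sg (nu m (j+1) e'') 1 \<in> ideal_gen (poly_ring V) (L m j)"
        using less.IH[of "exc m (j+1) e''" e''] less.prems exc1 exc2 ke'' by simp
      have "sg e 1 - sg e'' 1 = sg e' 1 * (var i ^ m - var 1 ^ m)"
        by (simp add: e_eq e''_def var_power mult_single right_diff_distrib)
      moreover have "\<dots> \<in> ideal_gen (poly_ring V) (L m j)"
        using telescope[of "i-1" j m V] i by (intro ig_mult pr_single ke') simp
      ultimately have "sg e 1 - sg e'' 1 \<in> ideal_gen (poly_ring V) (L m j)" by metis
      then have "sg e 1 - sg e'' 1 + (sg e'' 1 - sg (nu m (j+1) e'') 1) \<in> ideal_gen (poly_ring V) (L m j)" using IH by (rule ig_add)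
      then show ?thesis unfolding nu_eq by simp
    qed
  qed
  then show ?thesis using assms(3) by blast
qed

lemma NN_char: assumes "m > 0" "1 \<in> V" "p \<in> poly_ring V" "NN m (j+1) p = 0"
  shows "p \<in> ideal_gen (poly_ring V) (L m j)"
proof -
  have "p - NN m (j+1) p = (\<Sum>e\<in>ks p. sg e (lk p e)) - (\<Sum>e\<in>ks p. sg (nu m (j+1) e) (lk p e))"
    by (subst poly_expand[of p]) (simp add: Nf_def)
  also have "\<dots> = (\<Sum>e\<in>ks p. sg 0 (lk p e) * (sg e 1 - sg (nu m (j+1) e) 1))"
    by (simp add: sum_subtractf[symmetric] right_diff_distrib mult_single)
  finally have eq: "p - NN m (j+1) p = \<dots>" .
  have "(\<Sum>e\<in>ks p. sg 0 (lk p e) * (sg e 1 - sg (nu m (j+1) e) 1)) \<in> ideal_gen (poly_ring V) (L m j)"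
  proof (rule ig_sum)
    fix e assume "e \<in> ks p"
    then have "ks e \<subseteq> V" using assms(3) unfolding poly_ring_def by auto
    then show "sg 0 (lk p e) * (sg e 1 - sg (nu m (j+1) e) 1) \<in> ideal_gen (poly_ring V) (L m j)"
      using assms by (intro ig_mult pr_single mono_diff) auto
  qed
  then show ?thesis using eq assms(4) by simp
qed

lemma NN_prod: assumes "finite A" "A \<subseteq> {1..J}" "m > 0"
  shows "NN m J ((\<Prod>l\<in>A. var l ^ m) * g) = var 1 ^ (m * card A) * NN m J g"
  using assms
proof (induction A rule: finite_induct)
  case empty
  then show ?case by simp
next
  case (insert x A)
  have "NN m J ((\<Prod>l\<in>insert x A. var l ^ m) * g) = NN m J (var x ^ m * ((\<Prod>l\<in>A. var l ^ m) * g))"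
    using insert by (simp add: mult.assoc)
  also have "\<dots> = var 1 ^ m * NN m J ((\<Prod>l\<in>A. var l ^ m) * g)"
    using insert by (intro NN_var_low) auto
  also have "\<dots> = var 1 ^ (m * card (insert x A)) * NN m J g"
    using insert by (simp add: power_add mult.assoc)
  finally show ?case .
qed

lemma var_nonzero: "(var i :: rat mpoly) \<noteq> 0"
  unfolding var_def by (metis lookup_single_eq lookup_zero one_neq_zero)

lemma sum_zero_nat_pm: "(a :: nat \<Rightarrow>\<^sub>0 nat) + b = 0 \<Longrightarrow> a = 0"
  by (rule poly_mapping_eqI) (metis add_is_0 lookup_add lookup_zero)

lemma single_mult_lookup0: assumes "a \<noteq> 0" shows "lk (sg a c * (q :: rat mpoly)) 0 = 0"
proof (rule ccontr)
  assume "lk (sg a c * q) 0 \<noteq> 0"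
  then have "0 \<in> ks (sg a c * q)" by (meson in_keys_iff)
  then obtain a' b where ab: "0 = a' + b" "a' \<in> ks (sg a c)" using keys_mult[of "sg a c" q] by blast
  then have "a' = a" by (simp split: if_splits)
  then show False using assms sum_zero_nat_pm[of a' b] ab(1) by simp
qed

lemma NN_one: "m > 0 \<Longrightarrow> NN m J 1 = 1"
proof -
  assume "m > 0"
  have "nu m J 0 = 0" using \<open>m > 0\<close> by (intro nu_exc0) (simp add: exc_def)
  moreover have "(1 :: rat mpoly) = sg 0 1" by simp
  ultimately show ?thesis by (metis Nf_single)
qed

lemma var_pow_diff_nonzero: assumes "i \<noteq> 1" "m > 0"
  shows "(var i ^ m - var 1 ^ m :: rat mpoly) \<noteq> 0"
proof
  assume "(var i ^ m - var 1 ^ m :: rat mpoly) = 0"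
  then have "sg (sg i m) (1::rat) = sg (sg 1 m) 1" by (simp add: var_power)
  then have "lk (sg (sg i m) (1::rat)) (sg i m) = lk (sg (sg 1 m) 1) (sg i m)" by simp
  then have "sg i m = sg 1 m" by (cases "sg 1 m = sg i m") (simp_all add: lookup_single)
  then have "lk (sg i m) 1 = lk (sg 1 m) 1" by simp
  then show False using assms by (simp add: lookup_single)
qed

theorem lemma3p5:
  fixes n m :: nat
  assumes "n \<ge> 2" and "m \<ge> 1"
  shows "regular_sequence (poly_ring {1..n-1} :: rat mpoly set)
           (map (\<lambda>i. var (i+1) ^ m - var i ^ m) [1..<n-1] @
            [- ((\<Prod>i=1..n-2. var i ^ m) * var (n-1) ^ (2*m))])"
proof -
  define V where "V = {1..n-1}"
  define P :: "rat mpoly" where "P = - ((\<Prod>i=1..n-2. var i ^ m) * var (n-1) ^ (2*m))"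
  define fs where "fs = map (\<lambda>i. var (i+1) ^ m - var i ^ m :: rat mpoly) [1..<n-1] @ [P]"
  have m0: "m > 0" using assms by simp
  have V1: "1 \<in> V" using assms by (simp add: V_def)
  have len: "length fs = n - 1" using assms by (simp add: fs_def)
  have take_fs: "take i fs = L m i" if "i \<le> n - 2" for i
    using that assms by (simp add: fs_def L_def take_map take_upt)
  have nth_fs: "fs ! i = var (i+2) ^ m - var (i+1) ^ m" if "i < n - 2" for i
    using that by (simp add: fs_def nth_append nth_map nth_upt numeral_2_eq_2)
  have nth_last: "fs ! (n-2) = P"
    using assms by (simp add: fs_def nth_append numeral_2_eq_2)
  have NP: "NN m (n-1) (P * g) = - (var 1 ^ (m * (n - 2) + m + m) * NN m (n-1) g)" for g
  proof -
    have "P * g = - ((\<Prod>i=1..n-2. var i ^ m) * (var (n-1) ^ m * (var (n-1) ^ m * g)))"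
      by (simp add: P_def mult_2 power_add mult.assoc)
    moreover have "NN m (n-1) (var (n-1) ^ m * h) = var 1 ^ m * NN m (n-1) h" for h
      using assms by (intro NN_var_low) auto
    moreover have "NN m (n-1) ((\<Prod>i=1..n-2. var i ^ m) * h) = var 1 ^ (m * (n-2)) * NN m (n-1) h" for h
      using NN_prod[of "{1..n-2}" "n-1" m h] m0 by fastforce
    ultimately show ?thesis
      by (simp add: Nf_uminus power_add mult.assoc)
  qed
  have PR: "P \<in> poly_ring V"
    unfolding P_def using assms
    by (intro pr_uminus pr_mult pr_prod pr_var_power) (auto simp: V_def)
  have set_fs: "set fs \<subseteq> poly_ring V"
  proof
    fix x assume "x \<in> set fs"
    then consider "x = P" | i where "i \<in> {1..<n-1}" "x = var (i+1) ^ m - var i ^ m"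
      unfolding fs_def by auto
    then show "x \<in> poly_ring V"
    proof cases
      case 1 then show ?thesis using PR by simp
    next
      case 2 then show ?thesis
        by (auto intro!: pr_diff pr_var_power simp: V_def)
    qed
  qed
  have nzd: "g \<in> ideal_gen (poly_ring V) (take i fs)"
    if i: "i < length fs" and g: "g \<in> poly_ring V" and h: "fs ! i * g \<in> ideal_gen (poly_ring V) (take i fs)" for i g
  proof -
    have iI: "take i fs = L m i" using i len by (intro take_fs) simp
    have z: "NN m (i+1) (fs ! i * g) = 0"
      using h m0 unfolding iI by (intro NN_ideal)
    have "NN m (i+1) g = 0"
    proof (cases "i < n - 2")
      case True
      have "fs ! i * g = var (i+2) ^ m * g - var (i+1) ^ m * g"
        using True by (simp add: nth_fs algebra_simps)
      then have "NN m (i+1) (fs ! i * g) = var (i+2) ^ m * NN m (i+1) g - var 1 ^ m * NN m (i+1) g"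
        using m0 by (simp add: Nf_diff NN_var_high NN_var_low)
      then have "(var (i+2) ^ m - var 1 ^ m) * NN m (i+1) g = 0"
        using z by (simp only: left_diff_distrib)
      then show ?thesis using var_pow_diff_nonzero[of "i+2" m] m0 by simp
    next
      case False
      then have "i = n - 2" using i len by simp
      then have "i + 1 = n - 1" using assms by simp
      then have "- (var 1 ^ (m * (n - 2) + m + m) * NN m (i+1) g) = 0"
        using z NP \<open>i = n - 2\<close> nth_last by metis
      then show ?thesis using var_nonzero[of 1] by simp
    qed
    then show ?thesis unfolding iI using NN_char[OF m0 V1 g] by simp
  qed
  have one: "1 \<notin> ideal_gen (poly_ring V) fs"
  proof
    assume "1 \<in> ideal_gen (poly_ring V) fs"
    then obtain c where c: "1 = (\<Sum>i<n-1. c i * fs ! i)" "\<forall>i. c i \<in> poly_ring V"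
      unfolding ideal_gen_def len by auto
    have nsplit: "n - 1 = Suc (n - 2)" using assms by simp
    have s1: "(\<Sum>i<n-2. c i * fs ! i) = (\<Sum>i<length (L m (n-2)). c i * L m (n-2) ! i)"
      by (auto intro!: sum.cong simp: nth_fs L_nth)
    have "(\<Sum>i<n-2. c i * fs ! i) \<in> ideal_gen (poly_ring V) (L m (n-2))"
      unfolding s1 using c(2) by (rule ig_intro)
    then have z: "NN m (n-2+1) (\<Sum>i<n-2. c i * fs ! i) = 0" using m0 by (intro NN_ideal)
    have "1 = (\<Sum>i<n-2. c i * fs ! i) + P * c (n-2)"
      using c(1) nth_last unfolding nsplit by (simp add: mult.commute)
    then have "NN m (n-1) 1 = NN m (n-1) (\<Sum>i<n-2. c i * fs ! i) + NN m (n-1) (P * c (n-2))"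
      by (metis Nf_add)
    also have "NN m (n-1) (\<Sum>i<n-2. c i * fs ! i) = 0" using z nsplit by simp
    finally have "1 = - (var 1 ^ (m * (n - 2) + m + m) * NN m (n-1) (c (n-2)))"
      using NP NN_one[OF m0] by simp
    also have "\<dots> = sg (sg 1 (m * (n - 2) + m + m)) (-1) * NN m (n-1) (c (n-2))"
      by (simp add: var_power single_uminus)
    finally have "lk (1 :: rat mpoly) 0 = lk (sg (sg 1 (m * (n - 2) + m + m)) (-1) * NN m (n-1) (c (n-2))) 0"
      by simp
    also have "\<dots> = 0" using m0 by (intro single_mult_lookup0) (metis add_gr_0 lookup_single_eq lookup_zero less_irrefl)
    finally show False by simp
  qed
  show ?thesis
    unfolding regular_sequence_def
    using set_fs nzd one
    unfolding V_def P_def fs_def by blast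
qed

end
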